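(* Let $Y$ be a real Hilbert space, let $T\colon Y\to Y$ be a bounded linear operator that is bijective, let $\lambda>0$, and suppose that $\langle x, Tx\rangle+\lambda\|Tx\|^2\le 0$ for all $x\in Y$. Then for every maximally monotone multifunction $M\colon Y\rightrightarrows Y$, the multifunction $MT$ (given by $y\mapsto M(Ty)$) has a unique fixed point, i.e. there is exactly one $y\in Y$ with $y\in M(Ty)$. *)

theory Defs
  imports "HOL-Analysis.Analysis"
begin

definition graph_mf :: "('a \<Rightarrow> 'b set) \<Rightarrow> ('a \<times> 'b) set" where
  "graph_mf M = {(x, u). u \<in> M x}"

definition monotone_mf :: "('a::real_inner \<Rightarrow> 'a set) \<Rightarrow> bool" where
  "monotone_mf M \<longleftrightarrow> (\<forall>x y u v. u \<in> M x \<longrightarrow> v \<in> M y \<longrightarrow> inner (x - y) (u - v) \<ge> 0)"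

definition maximal_monotone_mf :: "('a::real_inner \<Rightarrow> 'a set) \<Rightarrow> bool" where
  "maximal_monotone_mf M \<longleftrightarrow> monotone_mf M \<and>
     (\<forall>M'. monotone_mf M' \<longrightarrow> graph_mf M \<subseteq> graph_mf M' \<longrightarrow> graph_mf M' = graph_mf M)"

end

theory Submission
  imports Defs
begin


definition phi :: "'a::real_inner \<times> 'a \<Rightarrow> 'a \<Rightarrow> real" where
  "phi z x = inner (x - fst z) (x + snd z)"

lemma phi_expand: "phi z (x + v) = phi z x + inner v (2 *\<^sub>R x + snd z - fst z) + (norm v)\<^sup>2"
  unfolding phi_def power2_norm_eq_inner
  by (simp add: inner_add_left inner_add_right inner_diff_left inner_diff_right inner_commute algebra_simps scaleR_2)

lemma phi_mid: "phi z ((1/2) *\<^sub>R (x + y)) = (phi z x + phi z y)/2 - (norm (x - y))\<^sup>2/4"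
  unfolding phi_def power2_norm_eq_inner
  apply (simp add: inner_add_left inner_add_right inner_diff_left inner_diff_right inner_commute algebra_simps scaleR_2)
  by (simp add: field_simps)

lemma phi_cont: "continuous_on UNIV (phi z)"
  unfolding phi_def by (intro continuous_intros)

lemma phi_lower: "phi z x \<ge> (norm x)\<^sup>2 - norm x * norm (snd z - fst z) - norm (fst z) * norm (snd z)"
proof -
  have "phi z x = (norm x)\<^sup>2 + inner x (snd z - fst z) - inner (fst z) (snd z)"
    unfolding phi_def power2_norm_eq_inner
    by (simp add: inner_add_left inner_add_right inner_diff_left inner_diff_right inner_commute algebra_simps)
  moreover have "inner x (snd z - fst z) \<ge> - (norm x * norm (snd z - fst z))"
    using norm_cauchy_schwarz[of "-x" "snd z - fst z"] by simp
  moreover have "inner (fst z) (snd z) \<le> norm (fst z) * norm (snd z)"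
    by (simp add: norm_cauchy_schwarz)
  ultimately show ?thesis by linarith
qed

lemma small_index:
  assumes "e > 0" shows "\<exists>M::nat. \<forall>n\<ge>M. inverse (real (Suc n)) < e"
proof -
  obtain M :: nat where M: "inverse (real (Suc M)) < e"
    using reals_Archimedean[OF assms] by blast
  have "inverse (real (Suc n)) < e" if "n \<ge> M" for n
  proof -
    have "inverse (real (Suc n)) \<le> inverse (real (Suc M))"
      using that by (simp add: le_imp_inverse_le)
    then show ?thesis using M by linarith
  qed
  then show ?thesis by blast
qed

lemma strong_min_exists:
  fixes f :: "'a::{real_normed_vector, complete_space} \<Rightarrow> real"
  assumes bdd: "\<And>x. f x \<ge> b"
    and mid: "\<And>x y. f ((1/2) *\<^sub>R (x+y)) \<le> (f x + f y)/2 - c * (norm (x-y))\<^sup>2"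
    and c: "c > 0"
    and lsc: "\<And>X p L. X \<longlonglongrightarrow> p \<Longrightarrow> (\<lambda>n. f (X n)) \<longlonglongrightarrow> L \<Longrightarrow> f p \<le> L"
  shows "\<exists>p. \<forall>x. f p \<le> f x"
proof -
  define m where "m = Inf (range f)"
  have bb: "bdd_below (range f)" using bdd by (metis bdd_belowI2)
  have fm: "m \<le> f x" for x unfolding m_def using bb by (simp add: cInf_lower)
  have "\<exists>x. f x < m + inverse (real (Suc n))" for n
  proof -
    have "Inf (range f) < m + inverse (real (Suc n))" unfolding m_def by simp
    then show ?thesis using cInf_lessD[of "range f"] by blast
  qed
  then obtain X where X: "\<And>n. f (X n) < m + inverse (real (Suc n))" by metis
  have dist: "c * (norm (X n - X k))\<^sup>2 \<le> (inverse (real (Suc n)) + inverse (real (Suc k)))/2" for n k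
  proof -
    have a: "f ((1/2) *\<^sub>R (X n + X k)) \<le> (f (X n) + f (X k))/2 - c * (norm (X n - X k))\<^sup>2" by (rule mid)
    have b: "m \<le> f ((1/2) *\<^sub>R (X n + X k))" by (rule fm)
    have c1: "f (X n) < m + inverse (real (Suc n))" by (rule X)
    have c2: "f (X k) < m + inverse (real (Suc k))" by (rule X)
    show ?thesis using a b c1 c2 by argo
  qed
  have "Cauchy X"
  proof (rule CauchyI)
    fix e :: real assume e: "e > 0"
    then have "c * e\<^sup>2 > 0" using c by simp
    then obtain M where M: "\<And>n. n \<ge> M \<Longrightarrow> inverse (real (Suc n)) < c * e\<^sup>2"
      using small_index by blast
    have "norm (X n - X k) < e" if "n \<ge> M" "k \<ge> M" for n k
    proof -
      have "c * (norm (X n - X k))\<^sup>2 < c * e\<^sup>2"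
        using dist[of n k] M[OF that(1)] M[OF that(2)] by argo
      then have "(norm (X n - X k))\<^sup>2 < e\<^sup>2" using c by simp
      then show ?thesis using e by (simp add: power2_less_imp_less)
    qed
    then show "\<exists>M. \<forall>m\<ge>M. \<forall>n\<ge>M. norm (X m - X n) < e" by blast
  qed
  then obtain p where p: "X \<longlonglongrightarrow> p"
    using Cauchy_convergent_iff convergent_def by blast
  have "(\<lambda>n. f (X n)) \<longlonglongrightarrow> m"
  proof (rule tendsto_sandwich[of "\<lambda>n. m" _ _ "\<lambda>n. m + inverse (real (Suc n))"])
    show "\<forall>\<^sub>F n in sequentially. m \<le> f (X n)" using fm by simp
    show "\<forall>\<^sub>F n in sequentially. f (X n) \<le> m + inverse (real (Suc n))" using X by (simp add: less_imp_le)
    show "(\<lambda>n. m) \<longlonglongrightarrow> m" by simp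
    show "(\<lambda>n. m + inverse (real (Suc n))) \<longlonglongrightarrow> m"
      using tendsto_add[OF tendsto_const[of m] LIMSEQ_inverse_real_of_nat] by simp
  qed
  then have "f p \<le> m" using lsc p by blast
  then show ?thesis using fm order.trans by blast
qed

definition mono_set :: "('a::real_inner \<times> 'a) set \<Rightarrow> bool" where
  "mono_set G \<longleftrightarrow> (\<forall>z\<in>G. \<forall>w\<in>G. inner (fst z - fst w) (snd z - snd w) \<ge> 0)"

lemma phi_tendsto: "X \<longlonglongrightarrow> p \<Longrightarrow> (\<lambda>n. phi z (X n)) \<longlonglongrightarrow> phi z p"
  unfolding phi_def by (intro tendsto_intros)

lemma quad_lower: "(t::real)\<^sup>2 - t * \<beta> - \<gamma> \<ge> - (\<beta>\<^sup>2/4) - \<gamma>"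
proof -
  have "0 \<le> (t - \<beta>/2)\<^sup>2" by simp
  also have "(t - \<beta>/2)\<^sup>2 = t\<^sup>2 - t * \<beta> + \<beta>\<^sup>2/4" by (simp add: power2_eq_square field_simps)
  finally show ?thesis by argo
qed

lemma phi_alt: "phi z x = (norm x)\<^sup>2 + inner x (snd z - fst z) - inner (fst z) (snd z)"
  unfolding phi_def power2_norm_eq_inner
  by (simp add: inner_add_left inner_add_right inner_diff_left inner_diff_right inner_commute algebra_simps)

lemma variance_ineq:
  fixes P :: "('a::real_inner \<times> 'a) set"
  assumes "finite P" "mono_set P" "\<And>z. z \<in> P \<Longrightarrow> \<mu> z \<ge> 0" "sum \<mu> P = 1"
  shows "inner (\<Sum>z\<in>P. \<mu> z *\<^sub>R fst z) (\<Sum>z\<in>P. \<mu> z *\<^sub>R snd z) \<le> (\<Sum>z\<in>P. \<mu> z * inner (fst z) (snd z))"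
proof -
  define A where "A = (\<Sum>z\<in>P. \<mu> z *\<^sub>R fst z)"
  define U where "U = (\<Sum>z\<in>P. \<mu> z *\<^sub>R snd z)"
  define Q where "Q = (\<Sum>z\<in>P. \<mu> z * inner (fst z) (snd z))"
  have nn: "0 \<le> (\<Sum>z\<in>P. \<Sum>w\<in>P. \<mu> z * \<mu> w * inner (fst z - fst w) (snd z - snd w))"
    using assms(2,3) unfolding mono_set_def by (intro sum_nonneg mult_nonneg_nonneg) auto
  have e1: "(\<Sum>z\<in>P. \<Sum>w\<in>P. \<mu> z * \<mu> w * inner (fst z) (snd z)) = Q"
  proof -
    have "(\<Sum>w\<in>P. \<mu> z * \<mu> w * inner (fst z) (snd z)) = \<mu> z * inner (fst z) (snd z) * (\<Sum>w\<in>P. \<mu> w)" for z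
    proof -
      have "(\<Sum>w\<in>P. \<mu> w * (\<mu> z * inner (fst z) (snd z))) = (\<Sum>w\<in>P. \<mu> w) * (\<mu> z * inner (fst z) (snd z))"
        by (rule sum_distrib_right[symmetric])
      then show ?thesis by (simp add: mult_ac)
    qed
    then have "(\<Sum>z\<in>P. \<Sum>w\<in>P. \<mu> z * \<mu> w * inner (fst z) (snd z)) = (\<Sum>z\<in>P. \<mu> z * inner (fst z) (snd z) * (\<Sum>w\<in>P. \<mu> w))"
      by simp
    then show ?thesis using assms(4) unfolding Q_def by simp
  qed
  have e2: "(\<Sum>z\<in>P. \<Sum>w\<in>P. \<mu> z * \<mu> w * inner (fst w) (snd w)) = Q"
  proof -
    have "(\<Sum>z\<in>P. \<Sum>w\<in>P. \<mu> z * \<mu> w * inner (fst w) (snd w)) = (\<Sum>w\<in>P. \<Sum>z\<in>P. \<mu> w * \<mu> z * inner (fst w) (snd w))"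
      by (subst sum.swap) (simp add: mult_ac)
    also have "\<dots> = Q" using e1 .
    finally show ?thesis .
  qed
  have e3: "(\<Sum>z\<in>P. \<Sum>w\<in>P. \<mu> z * \<mu> w * inner (fst z) (snd w)) = inner A U"
  proof -
    have "inner A U = (\<Sum>z\<in>P. \<mu> z * inner (fst z) U)" unfolding A_def by (simp add: inner_sum_left)
    also have "\<dots> = (\<Sum>z\<in>P. \<mu> z * (\<Sum>w\<in>P. \<mu> w * inner (fst z) (snd w)))" unfolding U_def by (simp add: inner_sum_right)
    also have "\<dots> = (\<Sum>z\<in>P. \<Sum>w\<in>P. \<mu> z * \<mu> w * inner (fst z) (snd w))" by (simp add: sum_distrib_left mult_ac)
    finally show ?thesis by simp
  qed
  have e4: "(\<Sum>z\<in>P. \<Sum>w\<in>P. \<mu> z * \<mu> w * inner (fst w) (snd z)) = inner A U"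
  proof -
    have "(\<Sum>z\<in>P. \<Sum>w\<in>P. \<mu> z * \<mu> w * inner (fst w) (snd z)) = (\<Sum>w\<in>P. \<Sum>z\<in>P. \<mu> w * \<mu> z * inner (fst w) (snd z))"
      by (subst sum.swap) (simp add: mult_ac)
    also have "\<dots> = inner A U" using e3 .
    finally show ?thesis .
  qed
  have "(\<Sum>z\<in>P. \<Sum>w\<in>P. \<mu> z * \<mu> w * inner (fst z - fst w) (snd z - snd w))
     = (\<Sum>z\<in>P. \<Sum>w\<in>P. \<mu> z * \<mu> w * inner (fst z) (snd z)) + (\<Sum>z\<in>P. \<Sum>w\<in>P. \<mu> z * \<mu> w * inner (fst w) (snd w))
       - (\<Sum>z\<in>P. \<Sum>w\<in>P. \<mu> z * \<mu> w * inner (fst z) (snd w)) - (\<Sum>z\<in>P. \<Sum>w\<in>P. \<mu> z * \<mu> w * inner (fst w) (snd z))"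
    by (simp add: inner_diff_left inner_diff_right algebra_simps sum.distrib sum_subtractf)
  then have "0 \<le> 2 * Q - 2 * inner A U" using nn e1 e2 e3 e4 by argo
  then show ?thesis unfolding A_def U_def Q_def by argo
qed

lemma finite_minty:
  fixes F :: "('a::{real_inner, complete_space} \<times> 'a) set"
  assumes fin: "finite F" and ne: "F \<noteq> {}" and mono: "mono_set F"
  shows "\<exists>x. \<forall>z\<in>F. phi z x \<le> 0"
proof -
  define h where "h x = Max ((\<lambda>z. phi z x) ` F)" for x
  have hge: "phi z x \<le> h x" if "z \<in> F" for z x
    unfolding h_def using fin that by (simp add: Max_ge)
  have hex: "\<exists>z\<in>F. h x = phi z x" for x
  proof -
    have "h x \<in> (\<lambda>z. phi z x) ` F" unfolding h_def using fin ne by (intro Max_in) auto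
    then show ?thesis by auto
  qed
  obtain z0 where z0: "z0 \<in> F" using ne by auto
  have bdd: "h x \<ge> - ((norm (snd z0 - fst z0))\<^sup>2/4) - norm (fst z0) * norm (snd z0)" for x
    using hge[OF z0, of x] phi_lower[where z=z0 and x=x] quad_lower[where t="norm x" and \<beta>="norm (snd z0 - fst z0)" and \<gamma>="norm (fst z0) * norm (snd z0)"]
    by argo
  have hmid: "h ((1/2) *\<^sub>R (x+y)) \<le> (h x + h y)/2 - (1/4) * (norm (x-y))\<^sup>2" for x y
  proof -
    obtain z where z: "z \<in> F" "h ((1/2) *\<^sub>R (x+y)) = phi z ((1/2) *\<^sub>R (x+y))" using hex by blast
    show ?thesis using z phi_mid[of z x y] hge[OF z(1), of x] hge[OF z(1), of y] by argo
  qed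
  have hlsc: "h p \<le> L" if "X \<longlonglongrightarrow> p" "(\<lambda>n. h (X n)) \<longlonglongrightarrow> L" for X p L
  proof -
    obtain z where z: "z \<in> F" "h p = phi z p" using hex by blast
    have "phi z p \<le> L"
      using LIMSEQ_le[OF phi_tendsto[OF that(1), of z] that(2)] hge[OF z(1)] by blast
    then show ?thesis using z by simp
  qed
  obtain x0 where x0: "\<And>x. h x0 \<le> h x"
    using strong_min_exists[where f=h, OF bdd hmid _ hlsc] by force
  define m0 where "m0 = h x0"
  define P where "P = {z\<in>F. phi z x0 = m0}"
  have Pfin: "finite P" and PF: "P \<subseteq> F" using fin unfolding P_def by auto
  have Pne: "P \<noteq> {}" using hex[of x0] unfolding P_def m0_def by force
  have inact: "phi z x0 < m0" if "z \<in> F" "z \<notin> P" for z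
    using that hge[of z x0] unfolding P_def m0_def by force
  define gg where "gg k = 2 *\<^sub>R x0 + snd k - fst k" for k :: "'a \<times> 'a"
  define K where "K = convex hull P"
  have Kc: "compact K" unfolding K_def using Pfin by (rule finite_imp_compact_convex_hull)
  have Kne: "K \<noteq> {}" unfolding K_def using Pne by simp
  have Kconv: "convex K" unfolding K_def by simp
  have PK: "P \<subseteq> K" unfolding K_def by (rule hull_subset)
  have "continuous_on K (\<lambda>k. norm (gg k))" unfolding gg_def by (intro continuous_intros)
  then obtain k0 where k0: "k0 \<in> K" "\<And>k. k \<in> K \<Longrightarrow> norm (gg k0) \<le> norm (gg k)"
    using continuous_attains_inf[OF Kc Kne] by blast
  have gg0: "gg k0 = 0"
  proof (rule ccontr)
    assume pne: "gg k0 \<noteq> 0"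
    define p where "p = gg k0"
    have var: "inner p (gg k) \<ge> (norm p)\<^sup>2" if k: "k \<in> K" for k
    proof (rule ccontr)
      assume neg: "\<not> inner p (gg k) \<ge> (norm p)\<^sup>2"
      define w where "w = gg k - p"
      define e where "e = inner p w"
      have e: "e < 0" using neg unfolding e_def w_def by (simp add: inner_diff_right power2_norm_eq_inner)
      have wne: "w \<noteq> 0" using e unfolding e_def by auto
      define N where "N = (norm w)\<^sup>2"
      have N: "N > 0" unfolding N_def using wne by simp
      define s where "s = min 1 (- e / N)"
      have s: "0 < s" "s \<le> 1" "s \<le> - e / N" unfolding s_def using e N by (auto simp: divide_neg_pos)
      have sN: "s * N \<le> - e" using s(3) N by (simp add: field_simps)
      define k' where "k' = (1 - s) *\<^sub>R k0 + s *\<^sub>R k"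
      have k'K: "k' \<in> K" unfolding k'_def using Kconv k0(1) k s by (intro convexD) auto
      have ggk': "gg k' = p + s *\<^sub>R w"
        unfolding k'_def w_def p_def gg_def by (simp add: algebra_simps)
      have "(norm (gg k'))\<^sup>2 = (norm p)\<^sup>2 + 2 * s * e + s * (s * N)"
        unfolding ggk' e_def N_def power2_norm_eq_inner
        by (simp add: inner_add_left inner_add_right inner_commute algebra_simps)
      also have "\<dots> \<le> (norm p)\<^sup>2 + 2 * s * e + s * (- e)"
        using mult_left_mono[OF sN less_imp_le[OF s(1)]] by argo
      also have "\<dots> < (norm p)\<^sup>2" using mult_pos_neg[OF s(1) e] by argo
      finally have "norm (gg k') < norm p" by (simp add: power2_less_imp_less)
      then show False using k0(2)[OF k'K] unfolding p_def by simp
    qed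
    have expand: "phi z (x0 - t *\<^sub>R p) = phi z x0 - t * inner p (gg z) + t\<^sup>2 * (norm p)\<^sup>2" for z t
    proof -
      have "phi z (x0 + (- t) *\<^sub>R p) = phi z x0 + inner ((- t) *\<^sub>R p) (gg z) + (norm ((- t) *\<^sub>R p))\<^sup>2"
        unfolding gg_def by (rule phi_expand)
      then show ?thesis by (simp add: power_mult_distrib)
    qed
    have ev: "\<forall>\<^sub>F t in at_right 0. phi z (x0 - t *\<^sub>R p) < m0" if z: "z \<in> F" for z
    proof (cases "z \<in> P")
      case True
      then have act: "phi z x0 = m0" unfolding P_def by simp
      have ip: "inner p (gg z) \<ge> (norm p)\<^sup>2" using var PK True by blast
      have np: "(norm p)\<^sup>2 > 0" using pne unfolding p_def by simp
      have "phi z (x0 - t *\<^sub>R p) < m0" if t: "0 < t" "t < 1" for t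
      proof -
        have "t * inner p (gg z) \<ge> t * (norm p)\<^sup>2" using ip t by (simp add: mult_left_mono)
        moreover have "t\<^sup>2 * (norm p)\<^sup>2 < t * (norm p)\<^sup>2"
        proof -
          have "t * (norm p)\<^sup>2 < 1 * (norm p)\<^sup>2" using mult_strict_right_mono[OF t(2) np] .
          then have "t * (t * (norm p)\<^sup>2) < t * (1 * (norm p)\<^sup>2)" using mult_strict_left_mono t(1) by blast
          then show ?thesis by (simp add: power2_eq_square mult.assoc)
        qed
        ultimately show ?thesis using expand[of z t] act by argo
      qed
      then show ?thesis unfolding eventually_at_right_field by (intro exI[of _ 1]) auto
    next
      case False
      have lt: "phi z x0 < m0" using inact z False by blast
      have "((\<lambda>t. phi z x0 - t * inner p (gg z) + t\<^sup>2 * (norm p)\<^sup>2) \<longlongrightarrow> phi z x0 - 0 * inner p (gg z) + 0\<^sup>2 * (norm p)\<^sup>2) (at_right 0)"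
        by (intro tendsto_intros)
      then have "((\<lambda>t. phi z (x0 - t *\<^sub>R p)) \<longlongrightarrow> phi z x0) (at_right 0)"
        unfolding expand by simp
      then show ?thesis using lt by (rule order_tendstoD)
    qed
    have "\<forall>\<^sub>F t in at_right 0. \<forall>z\<in>F. phi z (x0 - t *\<^sub>R p) < m0"
      using ev fin by (intro eventually_ball_finite) auto
    then obtain b where b: "b > 0" "\<And>t. t > 0 \<Longrightarrow> t < b \<Longrightarrow> \<forall>z\<in>F. phi z (x0 - t *\<^sub>R p) < m0"
      unfolding eventually_at_right_field by auto
    then have "\<forall>z\<in>F. phi z (x0 - (b/2) *\<^sub>R p) < m0" by simp
    moreover obtain z where "z \<in> F" "h (x0 - (b/2) *\<^sub>R p) = phi z (x0 - (b/2) *\<^sub>R p)" using hex by blast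
    ultimately have "h (x0 - (b/2) *\<^sub>R p) < h x0" unfolding m0_def by auto
    then show False using x0 by (meson not_le)
  qed
  have "k0 \<in> convex hull P" using k0(1) unfolding K_def .
  then obtain \<mu> where mu: "\<And>z. z \<in> P \<Longrightarrow> \<mu> z \<ge> 0" "sum \<mu> P = 1" "(\<Sum>z\<in>P. \<mu> z *\<^sub>R z) = k0"
    unfolding convex_hull_finite[OF Pfin] by blast
  define A where "A = (\<Sum>z\<in>P. \<mu> z *\<^sub>R fst z)"
  define U where "U = (\<Sum>z\<in>P. \<mu> z *\<^sub>R snd z)"
  define Q where "Q = (\<Sum>z\<in>P. \<mu> z * inner (fst z) (snd z))"
  have "fst k0 = A" unfolding A_def mu(3)[symmetric] by (simp add: fst_sum)
  moreover have "snd k0 = U" unfolding U_def mu(3)[symmetric] by (simp add: snd_sum)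
  ultimately have x0AU: "2 *\<^sub>R x0 + U - A = 0" using gg0 unfolding gg_def by simp
  have UA: "U - A = (\<Sum>z\<in>P. \<mu> z *\<^sub>R (snd z - fst z))"
    unfolding U_def A_def by (simp add: scaleR_diff_right sum_subtractf)
  have "m0 = (\<Sum>z\<in>P. \<mu> z * m0)" using mu(2) by (simp add: sum_distrib_right[symmetric])
  also have "\<dots> = (\<Sum>z\<in>P. \<mu> z * phi z x0)" unfolding P_def by (rule sum.cong) auto
  also have "\<dots> = (\<Sum>z\<in>P. \<mu> z * (norm x0)\<^sup>2 + \<mu> z * inner x0 (snd z - fst z) - \<mu> z * inner (fst z) (snd z))"
    unfolding phi_alt by (simp add: algebra_simps)
  also have "\<dots> = (norm x0)\<^sup>2 + inner x0 (U - A) - Q"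
    unfolding UA Q_def using mu(2)
    by (simp add: sum_subtractf sum.distrib sum_distrib_right[symmetric] inner_sum_right)
  finally have m0eq: "m0 = (norm x0)\<^sup>2 + inner x0 (U - A) - Q" .
  have "U - A = - 2 *\<^sub>R x0" using x0AU by (simp add: algebra_simps)
  then have i1: "inner x0 (U - A) = - 2 * (norm x0)\<^sup>2" by (simp add: power2_norm_eq_inner)
  have i2: "inner A U \<le> Q" unfolding A_def U_def Q_def using variance_ineq[OF Pfin _ mu(1,2)] mono PF
    unfolding mono_set_def by blast
  have "A - U = 2 *\<^sub>R x0" using x0AU by (simp add: algebra_simps)
  then have x0e: "x0 = (1/2) *\<^sub>R (A - U)" by simp
  have i3: "(norm x0)\<^sup>2 + inner A U = (1/4) * (norm (A + U))\<^sup>2"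
    unfolding x0e power2_norm_eq_inner
    by (simp add: inner_add_left inner_add_right inner_diff_left inner_diff_right inner_commute algebra_simps)
  have i4: "0 \<le> (1/4) * (norm (A + U))\<^sup>2" by simp
  have "m0 \<le> 0" using m0eq i1 i2 i3 i4 by argo
  then show ?thesis using hge unfolding m0_def by (meson order.trans)
qed

lemma mono_set_subset: "mono_set G \<Longrightarrow> F \<subseteq> G \<Longrightarrow> mono_set F"
  unfolding mono_set_def by blast


lemma sq_tendsto:
  fixes X :: "nat \<Rightarrow> 'a::real_normed_vector" and c :: real
  assumes c: "c \<ge> 0" and b: "\<And>n. (norm (X n))\<^sup>2 \<le> c * inverse (real (Suc n))"
  shows "X \<longlonglongrightarrow> 0"
proof (rule LIMSEQ_I)
  fix r :: real assume r: "r > 0"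
  then have "r\<^sup>2 / (c + 1) > 0" using c by simp
  then obtain M where M: "\<And>n. n \<ge> M \<Longrightarrow> inverse (real (Suc n)) < r\<^sup>2 / (c + 1)"
    using small_index by blast
  have "norm (X n - 0) < r" if "n \<ge> M" for n
  proof -
    have "c * inverse (real (Suc n)) \<le> c * (r\<^sup>2 / (c + 1))"
      by (rule mult_left_mono[OF less_imp_le[OF M[OF that]] c])
    also have "\<dots> < r\<^sup>2" using c r by (simp add: field_simps)
    finally have "(norm (X n))\<^sup>2 < r\<^sup>2" using b[of n] by argo
    then show ?thesis using r by (simp add: power2_less_imp_less)
  qed
  then show "\<exists>no. \<forall>n\<ge>no. norm (X n - 0) < r" by blast
qed

lemma sq_cauchy:
  fixes X :: "nat \<Rightarrow> 'a::real_normed_vector" and c :: real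
  assumes c: "c \<ge> 0" and b: "\<And>n m. n \<le> m \<Longrightarrow> (norm (X n - X m))\<^sup>2 \<le> c * inverse (real (Suc n))"
  shows "Cauchy X"
proof (rule CauchyI)
  fix r :: real assume r: "r > 0"
  then have "r\<^sup>2 / (c + 1) > 0" using c by simp
  then obtain M where M: "\<And>n. n \<ge> M \<Longrightarrow> inverse (real (Suc n)) < r\<^sup>2 / (c + 1)"
    using small_index by blast
  have *: "norm (X n - X m) < r" if "n \<ge> M" "n \<le> m" for n m
  proof -
    have "c * inverse (real (Suc n)) \<le> c * (r\<^sup>2 / (c + 1))"
      by (rule mult_left_mono[OF less_imp_le[OF M[OF that(1)]] c])
    also have "\<dots> < r\<^sup>2" using c r by (simp add: field_simps)
    finally have "(norm (X n - X m))\<^sup>2 < r\<^sup>2" using b[OF that(2)] by argo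
    then show ?thesis using r by (simp add: power2_less_imp_less)
  qed
  have "norm (X n - X m) < r" if "n \<ge> M" "m \<ge> M" for n m
  proof (cases "n \<le> m")
    case True then show ?thesis using * that by blast
  next
    case False then have "norm (X m - X n) < r" using * that by simp
    then show ?thesis by (simp add: norm_minus_commute)
  qed
  then show "\<exists>M. \<forall>m\<ge>M. \<forall>n\<ge>M. norm (X m - X n) < r" by blast
qed

lemma parallelogram_mid:
  fixes x y :: "'a::real_inner"
  shows "(norm (x - y))\<^sup>2 = 2 * (norm x)\<^sup>2 + 2 * (norm y)\<^sup>2 - 4 * (norm ((1/2) *\<^sub>R (x + y)))\<^sup>2"
  unfolding power2_norm_eq_inner
  by (simp add: inner_add_left inner_add_right inner_diff_left inner_diff_right inner_commute algebra_simps)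

lemma minty_core:
  fixes G :: "('a::{real_inner, complete_space} \<times> 'a) set"
  assumes mono: "mono_set G"
  shows "\<exists>x. \<forall>z\<in>G. phi z x \<le> 0"
proof (cases "G = {}")
  case True then show ?thesis by simp
next
  case False
  then obtain z0 where z0: "z0 \<in> G" by auto
  define KK where "KK F = {x::'a. \<forall>z\<in>F. phi z x \<le> 0}" for F :: "('a \<times> 'a) set"
  define FF where "FF = {F. finite F \<and> F \<subseteq> G \<and> z0 \<in> F}"
  have KKne: "\<exists>x. x \<in> KK F" if "F \<in> FF" for F
    using finite_minty[of F] mono_set_subset[OF mono] that unfolding FF_def KK_def by blast
  define \<beta> where "\<beta> = norm (snd z0 - fst z0)"
  define \<gamma> where "\<gamma> = norm (fst z0) * norm (snd z0)"
  define R where "R = \<beta>\<^sup>2 + 2 * \<gamma>"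
  have KKR: "(norm x)\<^sup>2 \<le> R" if "F \<in> FF" "x \<in> KK F" for F x
  proof -
    have "phi z0 x \<le> 0" using that unfolding FF_def KK_def by blast
    then have a: "(norm x)\<^sup>2 - norm x * \<beta> - \<gamma> \<le> 0" using phi_lower[where z=z0 and x=x] unfolding \<beta>_def \<gamma>_def by argo
    have "0 \<le> (norm x - \<beta>)\<^sup>2" by simp
    then have "2 * (norm x * \<beta>) \<le> (norm x)\<^sup>2 + \<beta>\<^sup>2" by (simp add: power2_diff)
    then show ?thesis using a unfolding R_def by argo
  qed
  define d where "d F = Inf ((\<lambda>x. (norm x)\<^sup>2) ` KK F)" for F
  have bddK: "bdd_below ((\<lambda>x. (norm x)\<^sup>2) ` KK F)" for F by (rule bdd_belowI2[of _ 0]) simp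
  have d_le: "d F \<le> (norm x)\<^sup>2" if "x \<in> KK F" for F x
    unfolding d_def using bddK that by (simp add: cInf_lower)
  have d_R: "d F \<le> R" if "F \<in> FF" for F
    using KKne[OF that] d_le KKR[OF that] by (meson order.trans)
  have d_approx: "\<exists>x\<in>KK F. (norm x)\<^sup>2 < d F + e" if "F \<in> FF" "e > 0" for F e
  proof -
    have lt: "Inf ((\<lambda>x. (norm x)\<^sup>2) ` KK F) < d F + e" unfolding d_def using that(2) by simp
    have ne: "(\<lambda>x. (norm x)\<^sup>2) ` KK F \<noteq> {}" using KKne[OF that(1)] by blast
    show ?thesis using cInf_lessD[OF ne lt] by blast
  qed
  have d_mono: "d F \<le> d F'" if "F \<in> FF" "F' \<in> FF" "F \<subseteq> F'" for F F'
  proof -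
    have "(\<lambda>x. (norm x)\<^sup>2) ` KK F' \<noteq> {}" using KKne[OF that(2)] by blast
    moreover have "d F \<le> y" if "y \<in> (\<lambda>x. (norm x)\<^sup>2) ` KK F'" for y
    proof -
      from that obtain x where x: "x \<in> KK F'" "y = (norm x)\<^sup>2" by blast
      then have "x \<in> KK F" using \<open>F \<subseteq> F'\<close> unfolding KK_def by blast
      then show ?thesis using d_le x(2) by simp
    qed
    ultimately show ?thesis unfolding d_def[of F'] by (rule cInf_greatest)
  qed
  have mid_in: "(1/2) *\<^sub>R (x + y) \<in> KK F" if "x \<in> KK F" "y \<in> KK F" for F x y
  proof -
    have "phi z ((1/2) *\<^sub>R (x + y)) \<le> 0" if "z \<in> F" for z
    proof -
      have "phi z x \<le> 0" "phi z y \<le> 0" using \<open>x \<in> KK F\<close> \<open>y \<in> KK F\<close> that unfolding KK_def by auto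
      moreover have "(norm (x - y))\<^sup>2 \<ge> 0" by simp
      ultimately show ?thesis using phi_mid[of z x y] by argo
    qed
    then show ?thesis unfolding KK_def by blast
  qed
  have para: "(norm (x - y))\<^sup>2 \<le> 2 * (norm x)\<^sup>2 + 2 * (norm y)\<^sup>2 - 4 * d F" if "x \<in> KK F" "y \<in> KK F" for F x y
    using parallelogram_mid[of x y] d_le[OF mid_in[OF that]] by argo
  have FFne: "{z0} \<in> FF" unfolding FF_def using z0 by simp
  define D where "D = Sup (d ` FF)"
  have bddD: "bdd_above (d ` FF)" using d_R by (intro bdd_aboveI2[where M=R]) auto
  have dD: "d F \<le> D" if "F \<in> FF" for F unfolding D_def using bddD that by (simp add: cSup_upper)
  have "\<exists>F\<in>FF. d F > D - inverse (real (Suc n))" for n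
  proof -
    have "D - inverse (real (Suc n)) < Sup (d ` FF)" unfolding D_def by simp
    then show ?thesis using less_cSupD[of "d ` FF"] FFne by blast
  qed
  then obtain Fs where Fs: "\<And>n. Fs n \<in> FF" "\<And>n. d (Fs n) > D - inverse (real (Suc n))" by metis
  define H where "H n = (\<Union>k\<le>n. Fs k)" for n
  have HFF: "H n \<in> FF" for n using Fs(1) unfolding H_def FF_def by auto
  have Hmono: "H n \<subseteq> H m" if "n \<le> m" for n m unfolding H_def using that by (intro UN_mono) auto
  have dH: "d (H n) > D - inverse (real (Suc n))" for n
  proof -
    have "Fs n \<subseteq> H n" unfolding H_def by auto
    then show ?thesis using d_mono[OF Fs(1) HFF] Fs(2)[of n] by fastforce
  qed
  have close: "(norm (x - y))\<^sup>2 \<le> 8 * inverse (real (Suc n))"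
    if "x \<in> KK (H n)" "y \<in> KK (H n)" "(norm x)\<^sup>2 < D + inverse (real (Suc n))" "(norm y)\<^sup>2 < D + inverse (real (Suc n))" for x y n
    using para[OF that(1,2)] dH[of n] that(3,4) by argo
  have KKanti: "KK F' \<subseteq> KK F" if "F \<subseteq> F'" for F F' unfolding KK_def using that by auto
  have "\<exists>x\<in>KK (H n). (norm x)\<^sup>2 < D + inverse (real (Suc n))" for n
    using d_approx[OF HFF[of n], of "inverse (real (Suc n))"] dD[OF HFF[of n]] by force
  then obtain xs where xs: "\<And>n. xs n \<in> KK (H n)" "\<And>n. (norm (xs n))\<^sup>2 < D + inverse (real (Suc n))" by metis
  have "Cauchy xs"
  proof (rule sq_cauchy[of 8])
    fix n m :: nat assume nm: "n \<le> m"
    have "xs m \<in> KK (H n)" using xs(1)[of m] KKanti[OF Hmono[OF nm]] by blast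
    moreover have "inverse (real (Suc m)) \<le> inverse (real (Suc n))" using nm by (simp add: le_imp_inverse_le)
    ultimately show "(norm (xs n - xs m))\<^sup>2 \<le> 8 * inverse (real (Suc n))"
      using close[OF xs(1)[of n], of "xs m"] xs(2)[of n] xs(2)[of m] by argo
  qed simp
  then obtain p where p: "xs \<longlonglongrightarrow> p" using Cauchy_convergent_iff convergent_def by blast
  have "phi z p \<le> 0" if z: "z \<in> G" for z
  proof -
    have HzFF: "H n \<union> {z} \<in> FF" for n using HFF[of n] z unfolding FF_def by auto
    have "\<exists>y\<in>KK (H n \<union> {z}). (norm y)\<^sup>2 < D + inverse (real (Suc n))" for n
      using d_approx[OF HzFF[of n], of "inverse (real (Suc n))"] dD[OF HzFF[of n]] by force
    then obtain ys where ys: "\<And>n. ys n \<in> KK (H n \<union> {z})" "\<And>n. (norm (ys n))\<^sup>2 < D + inverse (real (Suc n))" by metis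
    have ysH: "ys n \<in> KK (H n)" for n using ys(1)[of n] KKanti[of "H n" "H n \<union> {z}"] by blast
    have "(\<lambda>n. ys n - xs n) \<longlonglongrightarrow> 0"
    proof (rule sq_tendsto[of 8])
      fix n show "(norm (ys n - xs n))\<^sup>2 \<le> 8 * inverse (real (Suc n))"
        using close[OF ysH xs(1) ys(2) xs(2)] .
    qed simp
    then have "(\<lambda>n. (ys n - xs n) + xs n) \<longlonglongrightarrow> 0 + p" using p by (intro tendsto_add)
    then have "ys \<longlonglongrightarrow> p" by simp
    then have lim: "(\<lambda>n. phi z (ys n)) \<longlonglongrightarrow> phi z p" by (rule phi_tendsto)
    have "phi z (ys n) \<le> 0" for n using ys(1)[of n] unfolding KK_def by blast
    then show ?thesis using lim by (meson LIMSEQ_le_const2)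
  qed
  then show ?thesis by blast
qed



lemma max_mono_add:
  assumes mm: "maximal_monotone_mf M" and rel: "\<And>a u. u \<in> M a \<Longrightarrow> inner (x - a) (v - u) \<ge> 0"
  shows "v \<in> M x"
proof -
  define M' where "M' = M(x := insert v (M x))"
  have mem: "u \<in> M' y \<longleftrightarrow> u \<in> M y \<or> (y = x \<and> u = v)" for u y unfolding M'_def by auto
  have monoM: "monotone_mf M" using mm unfolding maximal_monotone_mf_def by blast
  have "monotone_mf M'"
    unfolding monotone_mf_def
  proof (intro allI impI)
    fix x1 y1 u1 v1 assume h1: "u1 \<in> M' x1" and h2: "v1 \<in> M' y1"
    show "inner (x1 - y1) (u1 - v1) \<ge> 0"
    proof (cases "u1 \<in> M x1")
      case True note t1 = True
      show ?thesis
      proof (cases "v1 \<in> M y1")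
        case True then show ?thesis using t1 monoM unfolding monotone_mf_def by blast
      next
        case False then have "y1 = x" "v1 = v" using h2 mem by auto
        then show ?thesis using rel[OF t1] by (simp add: inner_diff_left inner_diff_right algebra_simps)
      qed
    next
      case False then have e1: "x1 = x" "u1 = v" using h1 mem by auto
      show ?thesis
      proof (cases "v1 \<in> M y1")
        case True then show ?thesis using rel[OF True] e1 by simp
      next
        case False then have "y1 = x" "v1 = v" using h2 mem by auto
        then show ?thesis using e1 by simp
      qed
    qed
  qed
  moreover have "graph_mf M \<subseteq> graph_mf M'" unfolding graph_mf_def using mem by auto
  ultimately have "graph_mf M' = graph_mf M" using mm unfolding maximal_monotone_mf_def by blast
  moreover have "(x, v) \<in> graph_mf M'" unfolding graph_mf_def using mem by auto
  ultimately show ?thesis unfolding graph_mf_def by auto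
qed

lemma resolvent_exists:
  fixes M :: "'a::{real_inner, complete_space} \<Rightarrow> 'a set"
  assumes mm: "maximal_monotone_mf M" and g: "\<gamma> > 0"
  shows "\<exists>x. (1/\<gamma>) *\<^sub>R (w - x) \<in> M x"
proof -
  define G where "G = {(a, \<gamma> *\<^sub>R u - w) | a u. u \<in> M a}"
  have monoM: "monotone_mf M" using mm unfolding maximal_monotone_mf_def by blast
  have "mono_set G" unfolding mono_set_def G_def
  proof (clarify)
    fix a u b u' assume "u \<in> M a" "u' \<in> M b"
    then have "inner (a - b) (u - u') \<ge> 0" using monoM unfolding monotone_mf_def by blast
    then show "0 \<le> inner (fst (a, \<gamma> *\<^sub>R u - w) - fst (b, \<gamma> *\<^sub>R u' - w)) (snd (a, \<gamma> *\<^sub>R u - w) - snd (b, \<gamma> *\<^sub>R u' - w))"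
      using g by (simp add: scaleR_diff_right[symmetric])
  qed
  then obtain x where x: "\<And>z. z \<in> G \<Longrightarrow> phi z x \<le> 0" using minty_core by blast
  have "(1/\<gamma>) *\<^sub>R (w - x) \<in> M x"
  proof (rule max_mono_add[OF mm])
    fix a u assume u: "u \<in> M a"
    then have "(a, \<gamma> *\<^sub>R u - w) \<in> G" unfolding G_def by blast
    then have le: "inner (x - a) (x + (\<gamma> *\<^sub>R u - w)) \<le> 0" using x unfolding phi_def by fastforce
    have "(1/\<gamma>) *\<^sub>R (w - x) - u = (- (1/\<gamma>)) *\<^sub>R (x + (\<gamma> *\<^sub>R u - w))"
      using g by (simp add: algebra_simps)
    then have "inner (x - a) ((1/\<gamma>) *\<^sub>R (w - x) - u) = (- (1/\<gamma>)) * inner (x - a) (x + (\<gamma> *\<^sub>R u - w))"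
      by simp
    also have "\<dots> \<ge> 0" using le g by (simp add: divide_nonpos_pos)
    finally show "inner (x - a) ((1/\<gamma>) *\<^sub>R (w - x) - u) \<ge> 0" .
  qed
  then show ?thesis by blast
qed

lemma resolvent_nonexp:
  fixes M :: "'a::real_inner \<Rightarrow> 'a set"
  assumes monoM: "monotone_mf M" and g: "\<gamma> > 0"
    and h1: "(1/\<gamma>) *\<^sub>R (w1 - x1) \<in> M x1" and h2: "(1/\<gamma>) *\<^sub>R (w2 - x2) \<in> M x2"
  shows "norm (x1 - x2) \<le> norm (w1 - w2)"
proof -
  have "inner (x1 - x2) ((1/\<gamma>) *\<^sub>R (w1 - x1) - (1/\<gamma>) *\<^sub>R (w2 - x2)) \<ge> 0"
    using monoM h1 h2 unfolding monotone_mf_def by blast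
  also have "inner (x1 - x2) ((1/\<gamma>) *\<^sub>R (w1 - x1) - (1/\<gamma>) *\<^sub>R (w2 - x2)) = (1/\<gamma>) * inner (x1 - x2) ((w1 - w2) - (x1 - x2))"
  proof -
    have "(1/\<gamma>) *\<^sub>R (w1 - x1) - (1/\<gamma>) *\<^sub>R (w2 - x2) = (1/\<gamma>) *\<^sub>R ((w1 - w2) - (x1 - x2))"
      by (simp add: algebra_simps)
    then show ?thesis by simp
  qed
  finally have "inner (x1 - x2) ((w1 - w2) - (x1 - x2)) \<ge> 0" using g by (simp add: zero_le_divide_iff)
  then have "(norm (x1 - x2))\<^sup>2 \<le> inner (x1 - x2) (w1 - w2)"
    by (simp add: inner_diff_right power2_norm_eq_inner)
  also have "\<dots> \<le> norm (x1 - x2) * norm (w1 - w2)" by (rule norm_cauchy_schwarz)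
  finally have *: "norm (x1 - x2) * norm (x1 - x2) \<le> norm (x1 - x2) * norm (w1 - w2)" by (simp add: power2_eq_square)
  show ?thesis
  proof (cases "x1 = x2")
    case True then show ?thesis by simp
  next
    case False then have "norm (x1 - x2) > 0" by simp
    then show ?thesis using * by simp
  qed
qed



lemma partial_diff_bound:
  fixes f :: "nat \<Rightarrow> 'a::real_normed_vector"
  assumes "m \<le> n"
  shows "norm ((\<Sum>i<n. f i) - (\<Sum>i<m. f i)) \<le> (\<Sum>i<n. norm (f i)) - (\<Sum>i<m. norm (f i))"
proof -
  have "(\<Sum>i<n. f i) - (\<Sum>i<m. f i) = sum f {m..<n}"
    using sum_diff_nat_ivl[of 0 m n f] assms by (simp add: atLeast0LessThan)
  moreover have "(\<Sum>i<n. norm (f i)) - (\<Sum>i<m. norm (f i)) = (\<Sum>i\<in>{m..<n}. norm (f i))"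
    using sum_diff_nat_ivl[of 0 m n "\<lambda>i. norm (f i)"] assms by (simp add: atLeast0LessThan)
  ultimately show ?thesis using norm_sum by metis
qed

lemma summable_norm_cancel_gen:
  fixes f :: "nat \<Rightarrow> 'a::{real_normed_vector, complete_space}"
  assumes "summable (\<lambda>n. norm (f n))" shows "summable f"
proof -
  have CN: "Cauchy (\<lambda>n. \<Sum>i<n. norm (f i))" using assms unfolding summable_iff_convergent by (simp add: Cauchy_convergent_iff)
  have key: "norm ((\<Sum>i<n. f i) - (\<Sum>i<m. f i)) \<le> norm ((\<Sum>i<n. norm (f i)) - (\<Sum>i<m. norm (f i)))" for m n
  proof (cases "m \<le> n")
    case True then show ?thesis using partial_diff_bound[OF True, of f] by simp
  next
    case False
    then have "norm ((\<Sum>i<m. f i) - (\<Sum>i<n. f i)) \<le> (\<Sum>i<m. norm (f i)) - (\<Sum>i<n. norm (f i))"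
      by (intro partial_diff_bound) simp
    then show ?thesis by (simp add: norm_minus_commute)
  qed
  have "Cauchy (\<lambda>n. \<Sum>i<n. f i)"
  proof (rule CauchyI)
    fix e :: real assume "e > 0"
    then obtain M where M: "\<And>m n. m \<ge> M \<Longrightarrow> n \<ge> M \<Longrightarrow> norm ((\<Sum>i<m. norm (f i)) - (\<Sum>i<n. norm (f i))) < e"
      using CauchyD[OF CN] by blast
    show "\<exists>M. \<forall>m\<ge>M. \<forall>n\<ge>M. norm ((\<Sum>i<m. f i) - (\<Sum>i<n. f i)) < e"
      using M key by (meson order.strict_trans1)
  qed
  then show ?thesis unfolding summable_iff_convergent by (simp add: Cauchy_convergent_iff)
qed

lemma summable_norm_gen:
  fixes f :: "nat \<Rightarrow> 'a::{real_normed_vector, complete_space}"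
  assumes "summable (\<lambda>n. norm (f n))" shows "norm (suminf f) \<le> (\<Sum>n. norm (f n))"
proof -
  have sf: "summable f" using assms by (rule summable_norm_cancel_gen)
  have a: "(\<lambda>n. norm (\<Sum>i<n. f i)) \<longlonglongrightarrow> norm (suminf f)" by (intro tendsto_norm summable_LIMSEQ sf)
  have b: "(\<lambda>n. \<Sum>i<n. norm (f i)) \<longlonglongrightarrow> (\<Sum>n. norm (f n))" by (intro summable_LIMSEQ assms)
  show ?thesis by (rule LIMSEQ_le[OF a b]) (auto intro: norm_sum)
qed

lemma bounded_inverse:
  fixes T :: "'a::{real_normed_vector, complete_space} \<Rightarrow> 'a"
  assumes bl: "bounded_linear T" and bij: "bij T"
  shows "\<exists>C>0. \<forall>x. norm (inv T x) \<le> C * norm x"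
proof -
  have lin: "linear T" using bl by (rule bounded_linear.linear)
  have TI: "T (inv T x) = x" for x using bij by (simp add: bij_is_surj surj_f_inv_f)
  have IT: "inv T (T y) = y" for y using bij by (simp add: bij_is_inj inv_f_f)
  define E where "E n = closure (T ` cball 0 (real n))" for n :: nat
  have "\<exists>n. interior (E n) \<noteq> {}"
  proof (rule ccontr)
    assume "\<not> (\<exists>n. interior (E n) \<noteq> {})"
    then have empt: "\<And>n. interior (E n) = {}" by blast
    have "euclidean interior_of \<Union>(range E) = {}"
    proof (rule Baire_category_alt)
      show "completely_metrizable_space (euclidean :: 'a topology) \<or> locally_compact_space (euclidean :: 'a topology) \<and> regular_space (euclidean :: 'a topology)"
        using completely_metrizable_space_euclidean by blast
      show "countable (range E)" by simp
      fix S assume "S \<in> range E"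
      then obtain n where "S = E n" by blast
      then show "closedin euclidean S \<and> euclidean interior_of S = {}"
        using empt[of n] unfolding E_def by (simp add: closed_closedin[symmetric])
    qed
    moreover have "\<Union>(range E) = UNIV"
    proof -
      have "x \<in> E (nat \<lceil>norm (inv T x)\<rceil>)" for x
      proof -
        have "norm (inv T x) \<le> real (nat \<lceil>norm (inv T x)\<rceil>)" by linarith
        then have "inv T x \<in> cball 0 (real (nat \<lceil>norm (inv T x)\<rceil>))" by simp
        then have "x \<in> T ` cball 0 (real (nat \<lceil>norm (inv T x)\<rceil>))" by (rule image_eqI[where f=T and x="inv T x", OF TI[of x, symmetric]])
        then show ?thesis unfolding E_def by (rule subsetD[OF closure_subset])
      qed
      then show ?thesis by blast
    qed
    ultimately show False by simp
  qed
  then obtain n c r where r: "r > 0" "ball c r \<subseteq> E n"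
    by (meson ex_in_conv mem_interior)
  have convE: "convex (E n)" unfolding E_def
    by (intro convex_closure convex_linear_image[OF lin] convex_cball)
  have symE: "- v \<in> E n" if "v \<in> E n" for v
  proof -
    have "\<forall>e>0. \<exists>y\<in>T ` cball 0 (real n). dist y v < e" using that unfolding E_def closure_approachable .
    then have "\<forall>e>0. \<exists>y\<in>T ` cball 0 (real n). dist y (- v) < e"
    proof (intro allI impI)
      fix e :: real assume "e > 0"
      then obtain y where y: "y \<in> T ` cball 0 (real n)" "dist y v < e" using \<open>\<forall>e>0. _\<close> by blast
      then obtain w where w: "w \<in> cball 0 (real n)" "y = T w" by blast
      have "T (- w) = - y" using lin w(2) by (simp add: linear_neg)
      moreover have "- w \<in> cball 0 (real n)" using w(1) by simp
      ultimately have "- y \<in> T ` cball 0 (real n)" by (metis image_eqI)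
      moreover have "dist (- y) (- v) < e" using y(2) by (simp add: dist_norm norm_minus_commute)
      ultimately show "\<exists>y\<in>T ` cball 0 (real n). dist y (- v) < e" by blast
    qed
    then show ?thesis unfolding E_def closure_approachable .
  qed
  have ball0: "v \<in> E n" if "norm v < r" for v
  proof -
    have "c + v \<in> E n" using r(2) that by (simp add: dist_norm subset_iff)
    moreover have "c - v \<in> E n" using r(2) that by (simp add: dist_norm subset_iff)
    then have "- (c - v) \<in> E n" by (rule symE)
    ultimately have "(1/2) *\<^sub>R (c + v) + (1/2) *\<^sub>R (- (c - v)) \<in> E n"
      using convE by (intro convexD) auto
    moreover have "(1/2) *\<^sub>R (c + v) + (1/2) *\<^sub>R (- (c - v)) = v" by (simp add: algebra_simps scaleR_2[symmetric])
    ultimately show ?thesis by simp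
  qed
  have approx: "\<exists>y. norm y \<le> real n \<and> norm (v - T y) < e" if va: "norm v < r" and ea: "e > 0" for v e
  proof -
    have "v \<in> closure (T ` cball 0 (real n))" using ball0[OF va] unfolding E_def .
    then obtain y where "y \<in> T ` cball 0 (real n)" "dist y v < e" using ea unfolding closure_approachable by blast
    then show ?thesis by (auto simp: dist_norm norm_minus_commute)
  qed
  define K where "K = 2 * real n / r"
  have K: "K \<ge> 0" unfolding K_def using r by simp
  have step: "\<exists>y. norm y \<le> K * norm v \<and> norm (v - T y) \<le> norm v / 2" for v
  proof (cases "v = 0")
    case True then show ?thesis using lin by (intro exI[of _ 0]) (simp add: linear_0)
  next
    case False
    then have nv: "norm v > 0" by simp
    define w where "w = (r / (2 * norm v)) *\<^sub>R v"
    have nw: "norm w = r / 2" unfolding w_def using nv r by simp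
    then have "norm w < r" using r by simp
    then obtain y' where y': "norm y' \<le> real n" "norm (w - T y') < r / 4" using approx[of w "r/4"] r by auto
    define y where "y = (2 * norm v / r) *\<^sub>R y'"
    have "norm y = (2 * norm v / r) * norm y'" unfolding y_def using nv r by simp
    also have "\<dots> \<le> (2 * norm v / r) * real n" using y'(1) by (rule mult_left_mono) (use nv r in simp)
    also have "\<dots> = K * norm v" unfolding K_def by simp
    finally have ny: "norm y \<le> K * norm v" .
    have "v - T y = (2 * norm v / r) *\<^sub>R (w - T y')"
      unfolding y_def w_def using lin nv r by (simp add: linear_scale algebra_simps)
    then have "norm (v - T y) = (2 * norm v / r) * norm (w - T y')" using nv r by simp
    also have "\<dots> \<le> (2 * norm v / r) * (r / 4)" using y'(2) nv r by (intro mult_left_mono) auto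
    also have "\<dots> = norm v / 2" using r by simp
    finally show ?thesis using ny by blast
  qed
  then obtain g where g: "\<And>v. norm (g v) \<le> K * norm v" "\<And>v. norm (v - T (g v)) \<le> norm v / 2" by metis
  have main: "norm (inv T x) \<le> 2 * K * norm x" for x
  proof -
    define rr where "rr = rec_nat x (\<lambda>_ v. v - T (g v))"
    have rr0: "rr 0 = x" and rrS: "rr (Suc k) = rr k - T (g (rr k))" for k unfolding rr_def by simp_all
    have rrb: "norm (rr k) \<le> norm x * (1/2)^k" for k
    proof (induction k)
      case 0 then show ?case using rr0 by simp
    next
      case (Suc k)
      have "norm (rr (Suc k)) \<le> norm (rr k) / 2" unfolding rrS by (rule g(2))
      also have "\<dots> \<le> norm x * (1/2)^k / 2" using Suc by simp
      finally show ?case by simp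
    qed
    define ys where "ys k = g (rr k)" for k
    have ysb: "norm (ys k) \<le> K * norm x * (1/2)^k" for k
    proof -
      have "norm (ys k) \<le> K * norm (rr k)" unfolding ys_def by (rule g(1))
      also have "\<dots> \<le> K * (norm x * (1/2)^k)" using rrb[of k] K by (rule mult_left_mono)
      finally show ?thesis by (simp add: mult.assoc)
    qed
    have sg: "summable (\<lambda>k. K * norm x * (1/2::real)^k)" using summable_mult[OF summable_geometric[of "1/2::real"], of "K * norm x"] by simp
    have sn: "summable (\<lambda>k. norm (ys k))" by (rule summable_comparison_test'[where N=0, OF sg]) (use ysb in simp)
    then have sy: "summable ys" by (rule summable_norm_cancel_gen)
    have partial: "T (\<Sum>k<m. ys k) = x - rr m" for m
    proof (induction m)
      case 0 then show ?case using lin rr0 by (simp add: linear_0)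
    next
      case (Suc m)
      have "T (\<Sum>k<Suc m. ys k) = T (\<Sum>k<m. ys k) + T (ys m)" using lin by (simp add: linear_add)
      then show ?case using Suc rrS[of m] unfolding ys_def by simp
    qed
    have rr_lim: "rr \<longlonglongrightarrow> 0"
    proof (rule tendsto_norm_zero_cancel)
      show "(\<lambda>k. norm (rr k)) \<longlonglongrightarrow> 0"
      proof (rule tendsto_sandwich[of "\<lambda>k. 0" _ _ "\<lambda>k. norm x * (1/2)^k"])
        show "\<forall>\<^sub>F k in sequentially. 0 \<le> norm (rr k)" by simp
        show "\<forall>\<^sub>F k in sequentially. norm (rr k) \<le> norm x * (1/2)^k" using rrb by simp
        show "(\<lambda>k. 0) \<longlonglongrightarrow> (0::real)" by simp
        show "(\<lambda>k. norm x * (1/2::real)^k) \<longlonglongrightarrow> 0"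
          using tendsto_mult[OF tendsto_const[of "norm x"] LIMSEQ_power_zero[of "1/2::real"]] by simp
      qed
    qed
    have "(\<lambda>k. T (ys k)) sums x"
    proof -
      have "(\<lambda>m. x - rr m) \<longlonglongrightarrow> x - 0" using rr_lim by (intro tendsto_intros)
      then have "(\<lambda>m. \<Sum>k<m. T (ys k)) \<longlonglongrightarrow> x"
        using partial lin by (simp add: linear_sum)
      then show ?thesis unfolding sums_def .
    qed
    then have "T (suminf ys) = x"
      using bounded_linear.suminf[OF bl sy] sums_unique by metis
    then have inv: "inv T x = suminf ys" using IT by metis
    have "norm (suminf ys) \<le> (\<Sum>k. norm (ys k))" using sn by (rule summable_norm_gen)
    also have "\<dots> \<le> (\<Sum>k. K * norm x * (1/2)^k)" using ysb sn sg by (rule suminf_le)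
    also have "\<dots> = K * norm x * 2"
      using suminf_mult[OF summable_geometric[of "1/2::real"]] suminf_geometric[of "1/2::real"] by simp
    finally show ?thesis unfolding inv by simp
  qed
  have "norm (inv T x) \<le> (2 * K + 1) * norm x" for x
  proof -
    have "2 * K * norm x \<le> (2 * K + 1) * norm x" by (rule mult_right_mono) simp_all
    then show ?thesis using main[of x] by linarith
  qed
  moreover have "2 * K + 1 > 0" using K by simp
  ultimately show ?thesis by blast
qed


theorem lemma2p9:
  fixes T :: "'a::{real_inner, complete_space} \<Rightarrow> 'a" and lam :: real
  assumes "bounded_linear T"
    and "bij T"
    and "lam > 0"
    and "\<forall>x. inner x (T x) + lam * (norm (T x))\<^sup>2 \<le> 0"
  shows "\<forall>M :: 'a \<Rightarrow> 'a set. maximal_monotone_mf M \<longrightarrow> (\<exists>!y. y \<in> M (T y))"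
proof (intro allI impI)
  fix M :: "'a \<Rightarrow> 'a set" assume mm: "maximal_monotone_mf M"
  have monoM: "monotone_mf M" using mm unfolding maximal_monotone_mf_def by blast
  have lin: "linear T" using assms(1) by (rule bounded_linear.linear)
  define S where "S = inv T"
  have TS: "T (S x) = x" for x unfolding S_def using assms(2) by (simp add: bij_is_surj surj_f_inv_f)
  have ST: "S (T y) = y" for y unfolding S_def using assms(2) by (simp add: bij_is_inj inv_f_f)
  have Sdiff: "S (x - x') = S x - S x'" for x x'
  proof -
    have "T (S x - S x') = x - x'" using lin TS by (simp add: linear_diff)
    then show ?thesis using ST by metis
  qed
  have hyp: "inner x (T x) + lam * (norm (T x))\<^sup>2 \<le> 0" for x using assms(4) by blast
  have ex: "\<exists>y. y \<in> M (T y)"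
  proof -
    obtain C0 where C0: "C0 > 0" "\<And>x. norm (S x) \<le> C0 * norm x"
      using bounded_inverse[OF assms(1,2)] unfolding S_def by blast
    define C where "C = max C0 lam"
    have Cpos: "C > 0" and Clam: "lam \<le> C" unfolding C_def using C0 assms(3) by auto
    have SC: "norm (S x) \<le> C * norm x" for x
      using C0(2)[of x] unfolding C_def by (meson max.cobounded1 mult_right_mono norm_ge_zero order.trans)
    have neg: "inner v (S v) \<le> - lam * (norm v)\<^sup>2" for v
      using hyp[of "S v"] TS[of v] by (simp add: inner_commute)
    define \<gamma> where "\<gamma> = lam / C\<^sup>2"
    have g: "\<gamma> > 0" unfolding \<gamma>_def using assms(3) Cpos by simp
    define q where "q = 1 - lam\<^sup>2 / C\<^sup>2"
    have lc: "lam\<^sup>2 \<le> C\<^sup>2" using Clam assms(3) by (simp add: power_mono)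
    have lc2: "lam\<^sup>2 / C\<^sup>2 \<le> 1" using lc Cpos by simp
    have lc3: "lam\<^sup>2 / C\<^sup>2 > 0" using assms(3) Cpos by simp
    have q: "0 \<le> q" "q < 1" unfolding q_def using lc2 lc3 by auto
    have contr: "(norm (v + \<gamma> *\<^sub>R S v))\<^sup>2 \<le> q * (norm v)\<^sup>2" for v
    proof -
      have "(norm (v + \<gamma> *\<^sub>R S v))\<^sup>2 = (norm v)\<^sup>2 + 2 * \<gamma> * inner v (S v) + \<gamma>\<^sup>2 * (norm (S v))\<^sup>2"
        unfolding power2_norm_eq_inner by (simp add: inner_add_left inner_add_right inner_commute algebra_simps power2_eq_square)
      also have "\<dots> \<le> (norm v)\<^sup>2 + 2 * \<gamma> * (- lam * (norm v)\<^sup>2) + \<gamma>\<^sup>2 * (C * norm v)\<^sup>2"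
      proof -
        have "2 * \<gamma> * inner v (S v) \<le> 2 * \<gamma> * (- lam * (norm v)\<^sup>2)" using mult_left_mono[OF neg[of v], of "2*\<gamma>"] g by simp
        moreover have "\<gamma>\<^sup>2 * (norm (S v))\<^sup>2 \<le> \<gamma>\<^sup>2 * (C * norm v)\<^sup>2"
        proof -
          have "(norm (S v))\<^sup>2 \<le> (C * norm v)\<^sup>2" by (rule power_mono[OF SC norm_ge_zero])
          then show ?thesis by (rule mult_left_mono) simp
        qed
        ultimately show ?thesis by argo
      qed
      also have "\<dots> = (norm v)\<^sup>2 - 2 * (\<gamma> * lam) * (norm v)\<^sup>2 + (\<gamma>\<^sup>2 * C\<^sup>2) * (norm v)\<^sup>2"
        by (simp add: power_mult_distrib algebra_simps)
      also have "\<gamma> * lam = lam\<^sup>2 / C\<^sup>2" unfolding \<gamma>_def by (simp add: power2_eq_square)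
      also have "\<gamma>\<^sup>2 * C\<^sup>2 = lam\<^sup>2 / C\<^sup>2" unfolding \<gamma>_def using Cpos by (simp add: power_divide power2_eq_square)
      also have "(norm v)\<^sup>2 - 2 * (lam\<^sup>2 / C\<^sup>2) * (norm v)\<^sup>2 + lam\<^sup>2 / C\<^sup>2 * (norm v)\<^sup>2 = q * (norm v)\<^sup>2"
        unfolding q_def by (simp add: algebra_simps)
      finally show ?thesis .
    qed
    define c where "c = sqrt q"
    have c: "0 \<le> c" "c < 1" unfolding c_def using q by auto
    have contr2: "norm (v + \<gamma> *\<^sub>R S v) \<le> c * norm v" for v
    proof -
      have "sqrt ((norm (v + \<gamma> *\<^sub>R S v))\<^sup>2) \<le> sqrt (q * (norm v)\<^sup>2)" using contr[of v] by (rule real_sqrt_le_mono)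
      then show ?thesis unfolding c_def by (simp add: real_sqrt_mult)
    qed
    define J where "J w = (SOME x. (1/\<gamma>) *\<^sub>R (w - x) \<in> M x)" for w
    have J: "(1/\<gamma>) *\<^sub>R (w - J w) \<in> M (J w)" for w
      unfolding J_def using resolvent_exists[OF mm g, of w] by (rule someI_ex)
    define \<Phi> where "\<Phi> x = J (x + \<gamma> *\<^sub>R S x)" for x
    have "dist (\<Phi> x) (\<Phi> y) \<le> c * dist x y" for x y
    proof -
      have "dist (\<Phi> x) (\<Phi> y) \<le> norm ((x + \<gamma> *\<^sub>R S x) - (y + \<gamma> *\<^sub>R S y))"
        unfolding \<Phi>_def dist_norm by (rule resolvent_nonexp[OF monoM g J J])
      also have "(x + \<gamma> *\<^sub>R S x) - (y + \<gamma> *\<^sub>R S y) = (x - y) + \<gamma> *\<^sub>R S (x - y)"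
        by (simp add: Sdiff algebra_simps)
      finally show ?thesis using contr2[of "x - y"] unfolding dist_norm by linarith
    qed
    then obtain x where fx: "\<Phi> x = x" using banach_fix_type[OF c] by blast
    have "(1/\<gamma>) *\<^sub>R ((x + \<gamma> *\<^sub>R S x) - x) \<in> M x" using J[of "x + \<gamma> *\<^sub>R S x"] fx unfolding \<Phi>_def by simp
    then have "S x \<in> M x" using g by simp
    then show ?thesis using TS by metis
  qed
  have un: "y1 = y2" if h1: "y1 \<in> M (T y1)" and h2: "y2 \<in> M (T y2)" for y1 y2
  proof -
    have "inner (T y1 - T y2) (y1 - y2) \<ge> 0" using monoM h1 h2 unfolding monotone_mf_def by blast
    then have ge: "inner (y1 - y2) (T (y1 - y2)) \<ge> 0" using lin by (simp add: linear_diff inner_commute)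
    have "lam * (norm (T (y1 - y2)))\<^sup>2 \<le> 0" using hyp[of "y1 - y2"] ge by argo
    then have "T (y1 - y2) = 0" using assms(3) by (simp add: mult_le_0_iff)
    moreover have "T 0 = 0" using lin by (rule linear_0)
    ultimately have "y1 - y2 = 0" using ST[of "y1 - y2"] ST[of 0] by simp
    then show "y1 = y2" by simp
  qed
  show "\<exists>!y. y \<in> M (T y)" using ex un by blast
qed


end
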